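(* Let $H=(H^1,\dots,H^m):\mathbb{R}^d\to\mathbb{R}^m$ be such that for each $i$ there are convex functions $H^i_1,H^i_2:\mathbb{R}^d\to\mathbb{R}$ with $H^i=H^i_1-H^i_2$, and set $G:=\sum_{i=1}^m(H^i_1+H^i_2)$. Assume that $\gamma>0$, $A$ is a positive definite symmetric $d\times d$ matrix, and $L:\mathbb{R}^d\to\mathbb{R}$ satisfies $D^2L\ge A$ in the sense of distributions. For $(x,\tau)\in\mathbb{R}^d\times\mathbb{R}^m$ define \[\Phi(x,\tau):=\sup_{p\in\mathbb{R}^d}\Big\{p\cdot x-L(p)-\gamma G(p)+\sum_{i=1}^m\tau_iH^i(p)\Big\}.\] Then $\Phi\in C^{1,1}(\mathbb{R}^d\times(-\gamma,\gamma)^m)$, $0\le D_x^2\Phi\le A^{-1}$ in the sense of distributions, and \[\partial_{\tau_i}\Phi(x,\tau)=H^i(D_x\Phi(x,\tau))\quad\text{for } i=1,\dots,m,\ (x,\tau)\in\mathbb{R}^d\times(-\gamma,\gamma)^m.\] *)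

theory Defs
  imports "HOL-Analysis.Analysis"
begin

text \<open>Hessian bound "D^2 L \<ge> A" (in the sense of distributions) for a function on R^d,
  read for the (continuous) function L as: p \<mapsto> L p - (1/2) p.Ap is convex.\<close>
definition hess_ge :: "(real^'d \<Rightarrow> real) \<Rightarrow> real^'d^'d \<Rightarrow> bool" where
  "hess_ge L A \<longleftrightarrow> convex_on UNIV (\<lambda>p. L p - (1/2) * (p \<bullet> (A *v p)))"

definition hess_le :: "(real^'d \<Rightarrow> real) \<Rightarrow> real^'d^'d \<Rightarrow> bool" where
  "hess_le f A \<longleftrightarrow> convex_on UNIV (\<lambda>p. (1/2) * (p \<bullet> (A *v p)) - f p)"

definition C11_on :: "'a::euclidean_space set \<Rightarrow> ('a \<Rightarrow> real) \<Rightarrow> bool" where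
  "C11_on S f \<longleftrightarrow> (\<exists>g. (\<forall>z\<in>S. (f has_derivative (\<lambda>h. g z \<bullet> h)) (at z)) \<and>
      (\<forall>z\<in>S. \<exists>e>0. \<exists>C. lipschitz_on C (ball z e \<inter> S) g))"

definition Phi :: "(real^'d \<Rightarrow> real) \<Rightarrow> real \<Rightarrow> (real^'d \<Rightarrow> real) \<Rightarrow> ('m::finite \<Rightarrow> real^'d \<Rightarrow> real)
    \<Rightarrow> real^'d \<Rightarrow> real^'m \<Rightarrow> real" where
  "Phi L \<gamma> G H x \<tau> = (SUP p. p \<bullet> x - L p - \<gamma> * G p + (\<Sum>i\<in>UNIV. \<tau> $ i * H i p))"

end

theory Submission
  imports Defs
begin

lemma small_eps:
  fixes a b c :: real
  assumes "c \<ge> 0" and "\<And>t. 0 < t \<Longrightarrow> t < 1 \<Longrightarrow> a \<le> b + t * c"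
  shows "a \<le> b"
proof (rule ccontr)
  assume "\<not> a \<le> b"
  define t where "t = min (1/2) ((a - b) / (c + 1))"
  have t0: "0 < t" "t < 1" using \<open>\<not> a \<le> b\<close> assms(1) by (auto simp: t_def)
  have "t * c \<le> ((a - b) / (c + 1)) * c" using assms(1) by (intro mult_right_mono) (auto simp: t_def)
  also have "\<dots> < a - b" using \<open>\<not> a \<le> b\<close> assms(1) by (simp add: field_simps)
  finally show False using assms(2)[OF t0] by simp
qed

lemma conv_lin_lb:
  fixes f :: "'a::euclidean_space \<Rightarrow> real"
  assumes cf: "convex_on UNIV f"
  shows "\<exists>c\<ge>0. \<forall>p. f 0 - c * norm p \<le> f p"
proof -
  have "continuous_on UNIV f" using convex_on_continuous[OF open_UNIV cf] .
  then obtain r where r: "r > 0" "\<And>q. dist q 0 < r \<Longrightarrow> dist (f q) (f 0) < 1"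
    unfolding continuous_on_iff by (meson UNIV_I zero_less_one)
  have "f 0 - (2 / r) * norm p \<le> f p" for p
  proof (cases "p = 0")
    case True then show ?thesis by simp
  next
    case False
    define n where "n = norm p"
    have n: "n > 0" using False by (simp add: n_def)
    define q where "q = (- (r/2) / n) *\<^sub>R p"
    define t where "t = (r/2) / (n + r/2)"
    have t: "0 \<le> t" "t \<le> 1" using n r by (auto simp: t_def)
    have nq: "norm q = r/2" using n r by (simp add: q_def n_def)
    have "dist q 0 < r" using nq r by simp
    then have "dist (f q) (f 0) < 1" by (rule r(2))
    then have fq: "f q \<le> f 0 + 1" by (simp add: dist_real_def)
    have "(1 - t) *\<^sub>R q + t *\<^sub>R p = 0"
      using n r by (simp add: q_def t_def scaleR_scaleR field_simps flip: scaleR_add_left)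
    then have "f 0 \<le> (1 - t) * f q + t * f p"
      using convex_onD[OF cf t] by (metis UNIV_I)
    also have "\<dots> \<le> (1 - t) * (f 0 + 1) + t * f p"
      using t fq by (intro add_right_mono mult_left_mono) auto
    finally have "t * f 0 - (1 - t) \<le> t * f p" by (simp add: algebra_simps)
    then have "(n + r/2) * (t * f 0 - (1 - t)) \<le> (n + r/2) * (t * f p)"
      using n r by (intro mult_left_mono) auto
    moreover have "(n + r/2) * t = r/2" using n r by (simp add: t_def field_simps)
    moreover have "(n + r/2) * (1 - t) = n" using n r by (simp add: t_def field_simps)
    ultimately have "(r/2) * f 0 - n \<le> (r/2) * f p"
      by (simp add: right_diff_distrib mult.assoc[symmetric])
    then show ?thesis using r by (simp add: n_def field_simps)
  qed
  then show ?thesis using r by (intro exI[of _ "2/r"]) auto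
qed

lemma conv_lip:
  fixes f :: "'a::euclidean_space \<Rightarrow> real"
  assumes cf: "convex_on UNIV f"
  shows "\<exists>C\<ge>0. \<forall>p q. norm p \<le> R \<longrightarrow> norm q \<le> R \<longrightarrow> \<bar>f p - f q\<bar> \<le> C * norm (p - q)"
proof -
  have "continuous_on UNIV f" using convex_on_continuous[OF open_UNIV cf] .
  then have "compact (f ` cball 0 (\<bar>R\<bar> + 1))"
    by (meson compact_cball compact_continuous_image continuous_on_subset top_greatest)
  then have "bounded (f ` cball 0 (\<bar>R\<bar> + 1))" by (rule compact_imp_bounded)
  then obtain M where "\<forall>x\<in>f ` cball 0 (\<bar>R\<bar> + 1). norm x \<le> M"
    unfolding Elementary_Metric_Spaces.bounded_iff by (elim exE) simp
  then have M: "\<And>y. y \<in> cball 0 (\<bar>R\<bar>+1) \<Longrightarrow> \<bar>f y\<bar> \<le> M" by auto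
  have M0: "M \<ge> 0" using M[of 0] by auto
  have one: "f q - f p \<le> 2 * M * norm (q - p)" if p: "norm p \<le> R" and q: "norm q \<le> R" for p q
  proof (cases "p = q")
    case True then show ?thesis by simp
  next
    case False
    define d where "d = norm (q - p)"
    have d: "d > 0" using False by (simp add: d_def)
    define r where "r = q + (1/d) *\<^sub>R (q - p)"
    have "norm r \<le> norm q + norm ((1/d) *\<^sub>R (q - p))" unfolding r_def by (rule norm_triangle_ineq)
    also have "norm ((1/d) *\<^sub>R (q - p)) = 1" using d by (simp add: d_def)
    finally have rR: "r \<in> cball 0 (\<bar>R\<bar>+1)" using q by simp
    define t where "t = d / (1 + d)"
    have t: "0 \<le> t" "t \<le> 1" using d by (auto simp: t_def)
    have "(1 - t) *\<^sub>R p + t *\<^sub>R r = q"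
    proof -
      have "(1 - t) *\<^sub>R p + t *\<^sub>R r = (1/(1+d)) *\<^sub>R p + (d/(1+d)) *\<^sub>R q + (1/(1+d)) *\<^sub>R (q - p)"
        using d by (simp add: t_def r_def scaleR_add_right field_simps)
      also have "\<dots> = ((1/(1+d)) + (d/(1+d))) *\<^sub>R q"
        by (simp add: algebra_simps)
      also have "(1/(1+d)) + (d/(1+d)) = 1" using d by (simp add: field_simps)
      finally show ?thesis by simp
    qed
    then have "f q \<le> (1 - t) * f p + t * f r"
      using convex_onD[OF cf t] by (metis UNIV_I)
    then have "f q - f p \<le> t * (f r - f p)" by (simp add: algebra_simps)
    also have "\<dots> \<le> t * (2 * M)"
    proof (intro mult_left_mono)
      have "norm p \<le> \<bar>R\<bar> + 1" using p by linarith
      then show "f r - f p \<le> 2 * M" using M[OF rR] M[of p] by auto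
    qed (use t in auto)
    also have "\<dots> \<le> d * (2 * M)"
      using d M0 by (intro mult_right_mono) (auto simp: t_def field_simps)
    finally show ?thesis by (simp add: d_def mult.commute)
  qed
  show ?thesis
    apply (intro exI[of _ "2 * M"] conjI allI impI)
    using M0 apply simp
    using one by (smt (verit, best) norm_minus_commute)
qed

lemma convex_on_sum_fun:
  assumes "finite I" "\<And>i. i \<in> I \<Longrightarrow> convex_on S (f i)" "convex S"
  shows "convex_on S (\<lambda>x. \<Sum>i\<in>I. f i x)"
  using assms by (induction I rule: finite_induct) (auto simp: convex_on_const intro!: convex_on_add)

locale LT =
  fixes H H1 H2 :: "'m::finite \<Rightarrow> real^'d \<Rightarrow> real"
    and L G :: "real^'d \<Rightarrow> real"
    and A :: "real^'d^'d"
    and \<gamma> :: real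
  assumes H1_convex: "\<And>i. convex_on UNIV (H1 i)"
    and H2_convex: "\<And>i. convex_on UNIV (H2 i)"
    and H_def: "\<And>i p. H i p = H1 i p - H2 i p"
    and G_def: "\<And>p. G p = (\<Sum>i\<in>UNIV. H1 i p + H2 i p)"
    and gamma_pos: "\<gamma> > 0"
    and A_sym: "transpose A = A"
    and A_posdef: "\<And>v. v \<noteq> 0 \<Longrightarrow> v \<bullet> (A *v v) > 0"
    and L_hess: "hess_ge L A"
begin

definition "Q p = (1/2) * (p \<bullet> (A *v p))"
definition "K0 p = L p - Q p"
definition "BC = {\<tau>::real^'m. \<forall>i. \<bar>\<tau>$i\<bar> \<le> \<gamma>}"
definition "KT \<tau> p = K0 p + (\<Sum>i\<in>UNIV. (\<gamma> - \<tau>$i) * H1 i p + (\<gamma> + \<tau>$i) * H2 i p)"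
definition "obj x \<tau> p = p \<bullet> x - L p - \<gamma> * G p + (\<Sum>i\<in>UNIV. \<tau> $ i * H i p)"
definition "psi p = (p, \<chi> i. H i p)"
definition "E p = L p + \<gamma> * G p"

lemma K0_convex: "convex_on UNIV K0"
  using L_hess unfolding hess_ge_def K0_def Q_def by simp

lemma obj_split: "obj x \<tau> p = p \<bullet> x - Q p - KT \<tau> p"
  unfolding obj_def KT_def K0_def G_def H_def
  by (simp add: sum_distrib_left algebra_simps sum.distrib sum_subtractf)

lemma obj_psi: "obj x \<tau> p = psi p \<bullet> (x, \<tau>) - E p"
  unfolding obj_def psi_def E_def by (simp add: inner_vec_def mult.commute)

lemma A_symm: "u \<bullet> (A *v w) = w \<bullet> (A *v u)"
proof -
  have "u \<bullet> (A *v w) = (u v* A) \<bullet> w" by (simp add: dot_lmul_matrix)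
  also have "u v* A = transpose A *v u" by simp
  also have "\<dots> = A *v u" using A_sym by simp
  finally show ?thesis by (simp add: inner_commute)
qed

lemma Q_nonneg: "0 \<le> Q v"
  using A_posdef[of v] by (cases "v = 0") (auto simp: Q_def)

lemma Q_expand: "Q (p + t *\<^sub>R d) = Q p + t * (d \<bullet> (A *v p)) + t^2 * Q d"
  using A_symm[of p d]
  by (simp add: Q_def matrix_vector_right_distrib matrix_vector_mult_scaleR inner_add_left
      inner_add_right power2_eq_square algebra_simps)

lemma Q_minus: "Q (- v) = Q v"
  by (simp add: Q_def matrix_vector_mult_scaleR[of A "-1" v, simplified])

lemma quad_lb: "\<exists>a>0. \<forall>v. a * (norm v)^2 \<le> 2 * Q v"
proof -
  have cont: "continuous_on UNIV (\<lambda>v. v \<bullet> (A *v v))"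
    by (intro continuous_intros linear_continuous_on matrix_vector_mul_bounded_linear)
  have "sphere (0::real^'d) 1 \<noteq> {}" by simp
  then obtain u where u: "u \<in> sphere 0 1" "\<And>v. v \<in> sphere 0 1 \<Longrightarrow> u \<bullet> (A *v u) \<le> v \<bullet> (A *v v)"
    using continuous_attains_inf[OF compact_sphere, of 0 1 "\<lambda>v. v \<bullet> (A *v v)"] cont
    by (metis continuous_on_subset top_greatest)
  have u0: "u \<noteq> 0" using u(1) by auto
  define a where "a = u \<bullet> (A *v u)"
  have a: "a > 0" using A_posdef[OF u0] by (simp add: a_def)
  have "a * (norm v)^2 \<le> 2 * Q v" for v
  proof (cases "v = 0")
    case True then show ?thesis by (simp add: Q_def)
  next
    case False
    define w where "w = (1 / norm v) *\<^sub>R v"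
    have w: "w \<in> sphere 0 1" using False by (simp add: w_def)
    have v: "v = norm v *\<^sub>R w" using False by (simp add: w_def)
    have "v \<bullet> (A *v v) = (norm v)^2 * (w \<bullet> (A *v w))"
      by (subst (1 2) v) (simp add: matrix_vector_mult_scaleR power2_eq_square)
    moreover have "a \<le> w \<bullet> (A *v w)" using u(2)[OF w] by (simp add: a_def)
    ultimately show ?thesis by (simp add: Q_def mult_right_mono mult.commute)
  qed
  then show ?thesis using a by blast
qed

lemma KT_convex: "\<tau> \<in> BC \<Longrightarrow> convex_on UNIV (KT \<tau>)"
proof -
  assume "\<tau> \<in> BC"
  then have ti: "\<bar>\<tau>$i\<bar> \<le> \<gamma>" for i unfolding BC_def by auto
  have t: "\<gamma> - \<tau>$i \<ge> 0" "\<gamma> + \<tau>$i \<ge> 0" for i using ti[of i] by (auto simp: abs_le_iff)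
  show ?thesis
    unfolding KT_def
    by (intro convex_on_add K0_convex convex_on_sum_fun convex_on_cmul H1_convex H2_convex t) auto
qed

lemma bound: "\<exists>R\<ge>0. \<forall>x \<tau> p. norm x \<le> R0 \<longrightarrow> \<tau> \<in> BC \<longrightarrow> obj x \<tau> 0 \<le> obj x \<tau> p \<longrightarrow> norm p \<le> R"
proof -
  obtain c0 where c0: "c0 \<ge> 0" "\<And>p. K0 0 - c0 * norm p \<le> K0 p"
    using conv_lin_lb[OF K0_convex] by blast
  have "\<forall>i. \<exists>c. c \<ge> 0 \<and> (\<forall>p. H1 i 0 - c * norm p \<le> H1 i p)"
    using conv_lin_lb[OF H1_convex] by blast
  from choice[OF this] obtain c1 where c1: "\<And>i. c1 i \<ge> 0" "\<And>i p. H1 i 0 - c1 i * norm p \<le> H1 i p"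
    by blast
  have "\<forall>i. \<exists>c. c \<ge> 0 \<and> (\<forall>p. H2 i 0 - c * norm p \<le> H2 i p)"
    using conv_lin_lb[OF H2_convex] by blast
  from choice[OF this] obtain c2 where c2: "\<And>i. c2 i \<ge> 0" "\<And>i p. H2 i 0 - c2 i * norm p \<le> H2 i p"
    by blast
  obtain a where a: "a > 0" "\<And>v. a * (norm v)^2 \<le> 2 * Q v" using quad_lb by blast
  define C where "C = c0 + (\<Sum>i\<in>UNIV. 2 * \<gamma> * (c1 i + c2 i))"
  have C0: "C \<ge> 0" unfolding C_def using c0 c1 c2 gamma_pos
    by (intro add_nonneg_nonneg sum_nonneg) auto
  have KTlb: "KT \<tau> 0 - C * norm p \<le> KT \<tau> p" if "\<tau> \<in> BC" for \<tau> p
  proof -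
    define n where "n = norm p"
    have n: "n \<ge> 0" by (simp add: n_def)
    have ti: "\<bar>\<tau>$i\<bar> \<le> \<gamma>" for i using that unfolding BC_def by auto
    have tm: "- (2 * \<gamma> * (c1 i + c2 i) * n) \<le>
        ((\<gamma> - \<tau>$i) * H1 i p + (\<gamma> + \<tau>$i) * H2 i p) - ((\<gamma> - \<tau>$i) * H1 i 0 + (\<gamma> + \<tau>$i) * H2 i 0)" for i
    proof -
      have g1: "0 \<le> \<gamma> - \<tau>$i" "\<gamma> - \<tau>$i \<le> 2 * \<gamma>" "0 \<le> \<gamma> + \<tau>$i" "\<gamma> + \<tau>$i \<le> 2 * \<gamma>"
        using ti[of i] by (auto simp: abs_le_iff)
      have h1: "- (c1 i * n) \<le> H1 i p - H1 i 0" using c1(2)[of i p] by (simp add: n_def)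
      have h2: "- (c2 i * n) \<le> H2 i p - H2 i 0" using c2(2)[of i p] by (simp add: n_def)
      have "(\<gamma> - \<tau>$i) * (- (c1 i * n)) \<le> (\<gamma> - \<tau>$i) * (H1 i p - H1 i 0)"
        using g1 h1 by (intro mult_left_mono) auto
      moreover have "(\<gamma> + \<tau>$i) * (- (c2 i * n)) \<le> (\<gamma> + \<tau>$i) * (H2 i p - H2 i 0)"
        using g1 h2 by (intro mult_left_mono) auto
      moreover have "(2 * \<gamma>) * (c1 i * n) \<ge> (\<gamma> - \<tau>$i) * (c1 i * n)"
        using g1 c1(1)[of i] n by (intro mult_right_mono) auto
      moreover have "(2 * \<gamma>) * (c2 i * n) \<ge> (\<gamma> + \<tau>$i) * (c2 i * n)"
        using g1 c2(1)[of i] n by (intro mult_right_mono) auto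
      ultimately show ?thesis by (simp add: algebra_simps)
    qed
    have "- (\<Sum>i\<in>UNIV. 2 * \<gamma> * (c1 i + c2 i) * n) \<le>
        (\<Sum>i\<in>UNIV. (\<gamma> - \<tau>$i) * H1 i p + (\<gamma> + \<tau>$i) * H2 i p) - (\<Sum>i\<in>UNIV. (\<gamma> - \<tau>$i) * H1 i 0 + (\<gamma> + \<tau>$i) * H2 i 0)"
      unfolding sum_negf[symmetric] sum_subtractf[symmetric] by (intro sum_mono tm)
    moreover have "K0 0 - c0 * n \<le> K0 p" using c0(2) by (simp add: n_def)
    moreover have "C * n = c0 * n + (\<Sum>i\<in>UNIV. 2 * \<gamma> * (c1 i + c2 i) * n)"
      by (simp add: C_def distrib_right sum_distrib_right)
    ultimately show ?thesis unfolding KT_def n_def[symmetric] by linarith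
  qed
  define R where "R = 2 * (\<bar>R0\<bar> + C) / a"
  have "norm p \<le> R" if x: "norm x \<le> R0" and t: "\<tau> \<in> BC" and o: "obj x \<tau> 0 \<le> obj x \<tau> p" for x \<tau> p
  proof -
    define n where "n = norm p"
    have Q0: "Q 0 = 0" by (simp add: Q_def)
    have "p \<bullet> x \<le> n * \<bar>R0\<bar>"
      using norm_cauchy_schwarz[of p x] x by (smt (verit, best) mult_left_mono n_def norm_ge_zero)
    moreover have "a/2 * n^2 \<le> Q p" using a(2)[of p] by (simp add: n_def)
    moreover have "KT \<tau> 0 - C * n \<le> KT \<tau> p" using KTlb[OF t] by (simp add: n_def)
    moreover have "- KT \<tau> 0 \<le> p \<bullet> x - Q p - KT \<tau> p" using o by (simp add: obj_split Q0)
    ultimately have key: "a/2 * n^2 \<le> n * (\<bar>R0\<bar> + C)" by (simp add: algebra_simps)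
    show ?thesis
    proof (cases "n = 0")
      case True then show ?thesis using C0 a by (simp add: R_def n_def)
    next
      case False
      then have "n > 0" by (simp add: n_def)
      with key have "a/2 * n \<le> \<bar>R0\<bar> + C" by (simp add: power2_eq_square mult.assoc)
      then show ?thesis using a by (simp add: R_def n_def field_simps)
    qed
  qed
  moreover have "R \<ge> 0" using C0 a by (simp add: R_def)
  ultimately show ?thesis by blast
qed

lemma obj_cont: "\<tau> \<in> BC \<Longrightarrow> continuous_on UNIV (obj x \<tau>)"
proof -
  assume t: "\<tau> \<in> BC"
  have "continuous_on UNIV (KT \<tau>)" by (rule convex_on_continuous[OF open_UNIV KT_convex[OF t]])
  moreover have "continuous_on UNIV Q" unfolding Q_def
    by (intro continuous_intros linear_continuous_on matrix_vector_mul_bounded_linear)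
  ultimately have "continuous_on UNIV (\<lambda>p. p \<bullet> x - Q p - KT \<tau> p)"
    by (intro continuous_intros) auto
  then show ?thesis by (simp add: obj_split[abs_def])
qed

lemma ex_max: "\<tau> \<in> BC \<Longrightarrow> \<exists>p. \<forall>q. obj x \<tau> q \<le> obj x \<tau> p"
proof -
  assume t: "\<tau> \<in> BC"
  obtain R where R: "R \<ge> 0" "\<And>p. obj x \<tau> 0 \<le> obj x \<tau> p \<Longrightarrow> norm p \<le> R"
    using bound[of "norm x"] t by blast
  obtain p where p: "p \<in> cball 0 R" "\<And>q. q \<in> cball 0 R \<Longrightarrow> obj x \<tau> q \<le> obj x \<tau> p"
    using continuous_attains_sup[OF compact_cball, of 0 R "obj x \<tau>"] obj_cont[OF t] R(1)
    by (metis continuous_on_subset cball_eq_empty not_less top_greatest)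
  have "obj x \<tau> q \<le> obj x \<tau> p" for q
  proof (cases "obj x \<tau> 0 \<le> obj x \<tau> q")
    case True then show ?thesis using R(2) p(2) by simp
  next
    case False then show ?thesis using p(2)[of 0] R(1) by simp
  qed
  then show ?thesis by blast
qed

definition "pm x \<tau> = (SOME p. \<forall>q. obj x \<tau> q \<le> obj x \<tau> p)"

lemma pm_max: "\<tau> \<in> BC \<Longrightarrow> obj x \<tau> q \<le> obj x \<tau> (pm x \<tau>)"
  unfolding pm_def using someI_ex[OF ex_max] by blast

lemma Phi_eq: "\<tau> \<in> BC \<Longrightarrow> Phi L \<gamma> G H x \<tau> = obj x \<tau> (pm x \<tau>)"
proof -
  assume t: "\<tau> \<in> BC"
  have "Phi L \<gamma> G H x \<tau> = Sup (range (obj x \<tau>))"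
    unfolding Phi_def obj_def by simp
  also have "\<dots> = obj x \<tau> (pm x \<tau>)"
    by (rule cSup_eq_maximum) (auto intro: pm_max[OF t])
  finally show ?thesis .
qed

lemma strong: "\<tau> \<in> BC \<Longrightarrow> obj x \<tau> q \<le> obj x \<tau> (pm x \<tau>) - Q (q - pm x \<tau>)"
proof -
  assume tB: "\<tau> \<in> BC"
  define p where "p = pm x \<tau>"
  define d where "d = q - p"
  define K where "K = KT \<tau>"
  have X: "d \<bullet> x - d \<bullet> (A *v p) - K q + K p \<le> t * Q d" if t: "0 < t" "t < 1" for t
  proof -
    have "(1 - t) *\<^sub>R p + t *\<^sub>R q = p + t *\<^sub>R d" by (simp add: d_def algebra_simps)
    then have Kt: "K (p + t *\<^sub>R d) \<le> (1 - t) * K p + t * K q"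
      using convex_onD[OF KT_convex[OF tB], of t p q] t unfolding K_def by simp
    have "obj x \<tau> (p + t *\<^sub>R d) \<le> obj x \<tau> p" unfolding p_def by (rule pm_max[OF tB])
    then have "(p + t *\<^sub>R d) \<bullet> x - Q (p + t *\<^sub>R d) - K (p + t *\<^sub>R d) \<le> p \<bullet> x - Q p - K p"
      by (simp add: obj_split K_def)
    then have "p \<bullet> x + t * (d \<bullet> x) - (Q p + t * (d \<bullet> (A *v p)) + t^2 * Q d) - ((1 - t) * K p + t * K q)
        \<le> p \<bullet> x - Q p - K p"
      using Kt by (simp add: Q_expand inner_add_left)
    then have "t * (d \<bullet> x - d \<bullet> (A *v p) - K q + K p) \<le> t * (t * Q d)"
      by (simp add: algebra_simps power2_eq_square)
    then show ?thesis using t by simp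
  qed
  have "d \<bullet> x - d \<bullet> (A *v p) - K q + K p \<le> 0"
    using small_eps[OF Q_nonneg[of d], of "d \<bullet> x - d \<bullet> (A *v p) - K q + K p" 0] X by simp
  moreover have "q = p + 1 *\<^sub>R d" by (simp add: d_def)
  then have "obj x \<tau> q = p \<bullet> x + d \<bullet> x - (Q p + d \<bullet> (A *v p) + Q d) - K q"
    using Q_expand[of p 1 d] by (simp add: obj_split K_def inner_add_left)
  ultimately show ?thesis by (simp add: obj_split K_def p_def[symmetric] d_def[symmetric])
qed

lemma psi_lip: "\<exists>\<Lambda>\<ge>0. \<forall>p q. norm p \<le> R \<longrightarrow> norm q \<le> R \<longrightarrow> norm (psi p - psi q) \<le> \<Lambda> * norm (p - q)"
proof -
  have "\<forall>i. \<exists>C\<ge>0. \<forall>p q. norm p \<le> R \<longrightarrow> norm q \<le> R \<longrightarrow> \<bar>H1 i p - H1 i q\<bar> \<le> C * norm (p - q)"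
    using conv_lip[OF H1_convex] by blast
  from choice[OF this] obtain C1 where C1: "\<And>i. C1 i \<ge> 0"
    "\<And>i p q. norm p \<le> R \<Longrightarrow> norm q \<le> R \<Longrightarrow> \<bar>H1 i p - H1 i q\<bar> \<le> C1 i * norm (p - q)" by blast
  have "\<forall>i. \<exists>C\<ge>0. \<forall>p q. norm p \<le> R \<longrightarrow> norm q \<le> R \<longrightarrow> \<bar>H2 i p - H2 i q\<bar> \<le> C * norm (p - q)"
    using conv_lip[OF H2_convex] by blast
  from choice[OF this] obtain C2 where C2: "\<And>i. C2 i \<ge> 0"
    "\<And>i p q. norm p \<le> R \<Longrightarrow> norm q \<le> R \<Longrightarrow> \<bar>H2 i p - H2 i q\<bar> \<le> C2 i * norm (p - q)" by blast
  define \<Lambda> where "\<Lambda> = 1 + (\<Sum>i\<in>UNIV. C1 i + C2 i)"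
  have "norm (psi p - psi q) \<le> \<Lambda> * norm (p - q)" if p: "norm p \<le> R" and q: "norm q \<le> R" for p q
  proof -
    have hi: "\<bar>H i p - H i q\<bar> \<le> (C1 i + C2 i) * norm (p - q)" for i
    proof -
      have "\<bar>H i p - H i q\<bar> \<le> \<bar>H1 i p - H1 i q\<bar> + \<bar>H2 i p - H2 i q\<bar>" by (simp add: H_def)
      also have "\<dots> \<le> C1 i * norm (p - q) + C2 i * norm (p - q)"
        using C1(2)[OF p q] C2(2)[OF p q] by (intro add_mono)
      finally show ?thesis by (simp add: distrib_right)
    qed
    have "psi p - psi q = (p - q, (\<chi> i. H i p - H i q))"
      by (simp add: psi_def vec_eq_iff)
    then have "norm (psi p - psi q) \<le> norm (p - q) + norm (\<chi> i. H i p - H i q)"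
      using norm_Pair_le by metis
    also have "norm (\<chi> i. H i p - H i q) \<le> (\<Sum>i\<in>UNIV. \<bar>H i p - H i q\<bar>)"
      using norm_le_l1_cart[of "\<chi> i. H i p - H i q"] by simp
    also have "\<dots> \<le> (\<Sum>i\<in>UNIV. (C1 i + C2 i) * norm (p - q))"
      by (intro sum_mono hi)
    finally show ?thesis by (simp add: \<Lambda>_def distrib_right sum_distrib_right)
  qed
  moreover have "\<Lambda> \<ge> 0" unfolding \<Lambda>_def using C1(1) C2(1) by (intro add_nonneg_nonneg sum_nonneg) auto
  ultimately show ?thesis by blast
qed

definition "PM z = pm (fst z) (snd z)"
definition "FF z = Phi L \<gamma> G H (fst z) (snd z)"

lemma ob_psi: "obj (fst z) (snd z) p = psi p \<bullet> z - E p"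
  using obj_psi[of "fst z" "snd z" p] by simp

lemma core: "\<exists>M\<ge>0. \<forall>z z'. norm (fst z) \<le> R0 \<longrightarrow> norm (fst z') \<le> R0 \<longrightarrow> snd z \<in> BC \<longrightarrow> snd z' \<in> BC \<longrightarrow>
   norm (psi (PM z') - psi (PM z)) \<le> M * norm (z' - z) \<and>
   \<bar>FF z' - FF z - psi (PM z) \<bullet> (z' - z)\<bar> \<le> M * (norm (z' - z))^2"
proof -
  obtain R where R: "R \<ge> 0" "\<And>x \<tau> p. norm x \<le> R0 \<Longrightarrow> \<tau> \<in> BC \<Longrightarrow> obj x \<tau> 0 \<le> obj x \<tau> p \<Longrightarrow> norm p \<le> R"
    using bound[of R0] by blast
  obtain \<Lambda> where La: "\<Lambda> \<ge> 0" "\<And>p q. norm p \<le> R \<Longrightarrow> norm q \<le> R \<Longrightarrow> norm (psi p - psi q) \<le> \<Lambda> * norm (p - q)"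
    using psi_lip[of R] by blast
  obtain a where a: "a > 0" "\<And>v. a * (norm v)^2 \<le> 2 * Q v" using quad_lb by blast
  define M where "M = \<Lambda>^2 / a"
  have PMb: "norm (PM z) \<le> R" if "norm (fst z) \<le> R0" "snd z \<in> BC" for z
    using R(2)[OF that pm_max[OF that(2)]] by (simp add: PM_def)
  have "norm (psi (PM z') - psi (PM z)) \<le> M * norm (z' - z) \<and>
   \<bar>FF z' - FF z - psi (PM z) \<bullet> (z' - z)\<bar> \<le> M * (norm (z' - z))^2"
    if z: "norm (fst z) \<le> R0" "snd z \<in> BC" and z': "norm (fst z') \<le> R0" "snd z' \<in> BC" for z z'
  proof -
    define p where "p = PM z"
    define p' where "p' = PM z'"
    let ?ob = "\<lambda>z p. obj (fst z) (snd z) p"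
    have F1: "FF z = ?ob z p" using Phi_eq[OF z(2)] by (simp add: FF_def p_def PM_def)
    have F2: "FF z' = ?ob z' p'" using Phi_eq[OF z'(2)] by (simp add: FF_def p'_def PM_def)
    have S1: "?ob z p' \<le> ?ob z p - Q (p' - p)" using strong[OF z(2)] by (simp add: p_def PM_def)
    have S2: "?ob z' p \<le> ?ob z' p' - Q (p - p')" using strong[OF z'(2)] by (simp add: p'_def PM_def)
    have M1: "?ob z' p \<le> ?ob z' p'" using pm_max[OF z'(2)] by (simp add: p'_def PM_def)
    have M2: "?ob z p' \<le> ?ob z p" using pm_max[OF z(2)] by (simp add: p_def PM_def)
    have Qs: "Q (p - p') = Q (p' - p)" using Q_minus[of "p' - p"] by simp
    define D where "D = (psi p' - psi p) \<bullet> (z' - z)"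
    have Dexp: "D = ?ob z' p' - ?ob z' p + ?ob z p - ?ob z p'"
      unfolding D_def ob_psi by (simp add: inner_diff_left inner_diff_right)
    have QD: "2 * Q (p' - p) \<le> D" using S1 S2 Qs Dexp by linarith
    have DC: "D \<le> norm (psi p' - psi p) * norm (z' - z)"
      unfolding D_def by (rule order_trans[OF _ norm_cauchy_schwarz]) simp
    have Lp: "norm (psi p' - psi p) \<le> \<Lambda> * norm (p' - p)"
      using La(2) PMb[OF z] PMb[OF z'] by (simp add: p_def p'_def)
    have "a * (norm (p' - p))^2 \<le> \<Lambda> * norm (p' - p) * norm (z' - z)"
      using a(2)[of "p' - p"] QD DC Lp mult_right_mono[OF Lp norm_ge_zero[of "z' - z"]] by linarith
    then have ap: "a * norm (p' - p) \<le> \<Lambda> * norm (z' - z)"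
      using La(1) by (cases "norm (p' - p) = 0") (auto simp: power2_eq_square mult.commute mult.left_commute)
    have "norm (psi p' - psi p) \<le> M * norm (z' - z)"
    proof -
      have "\<Lambda> * (a * norm (p' - p)) \<le> \<Lambda> * (\<Lambda> * norm (z' - z))"
        using ap La(1) by (rule mult_left_mono)
      then have "\<Lambda> * norm (p' - p) \<le> \<Lambda>^2 / a * norm (z' - z)"
        using a(1) by (simp add: field_simps power2_eq_square)
      then show ?thesis using Lp by (simp add: M_def)
    qed
    moreover have "\<bar>FF z' - FF z - psi p \<bullet> (z' - z)\<bar> \<le> M * (norm (z' - z))^2"
    proof -
      have e: "FF z' - FF z - psi p \<bullet> (z' - z) = ?ob z' p' - ?ob z' p"
        unfolding F1 F2 ob_psi by (simp add: inner_diff_right)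
      have "?ob z' p' - ?ob z' p \<le> D" using Dexp M2 by linarith
      also have "\<dots> \<le> norm (psi p' - psi p) * norm (z' - z)" by (rule DC)
      also have "\<dots> \<le> (M * norm (z' - z)) * norm (z' - z)"
        using calculation \<open>norm (psi p' - psi p) \<le> M * norm (z' - z)\<close> by (intro mult_right_mono) auto
      finally show ?thesis using e M1 by (simp add: power2_eq_square mult.assoc)
    qed
    ultimately show ?thesis by (simp add: p_def p'_def)
  qed
  moreover have "M \<ge> 0" using a(1) by (simp add: M_def)
  ultimately show ?thesis by blast
qed

definition "OB = {\<tau>::real^'m. \<forall>i. -\<gamma> < \<tau> $ i \<and> \<tau> $ i < \<gamma>}"

lemma OB_BC:
  assumes "\<tau> \<in> OB" shows "\<tau> \<in> BC"
proof -
  have "\<bar>\<tau>$i\<bar> \<le> \<gamma>" for i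
  proof -
    have "-\<gamma> < \<tau>$i \<and> \<tau>$i < \<gamma>" using assms by (simp add: OB_def)
    then show ?thesis by linarith
  qed
  then show ?thesis by (simp add: BC_def)
qed

lemma open_OB: "open OB"
proof -
  have "OB = box (\<chi> i. -\<gamma>) (\<chi> i. \<gamma>)" unfolding OB_def by (auto simp: mem_box_cart)
  then show ?thesis by (simp add: open_box)
qed

lemma open_S: "open (UNIV \<times> OB)"
  by (intro open_Times open_UNIV open_OB)

lemma near:
  assumes "z \<in> UNIV \<times> OB"
  shows "\<exists>e0>0. \<exists>M\<ge>0. ball z e0 \<subseteq> UNIV \<times> OB \<and>
    (\<forall>w\<in>ball z e0. \<forall>w'\<in>ball z e0. norm (psi (PM w') - psi (PM w)) \<le> M * norm (w' - w) \<and>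
       \<bar>FF w' - FF w - psi (PM w) \<bullet> (w' - w)\<bar> \<le> M * (norm (w' - w))^2)"
proof -
  obtain e0 where e0: "e0 > 0" "ball z e0 \<subseteq> UNIV \<times> OB"
    using open_contains_ball_eq[OF open_S] assms by blast
  obtain M where M: "M \<ge> 0" "\<And>w w'. norm (fst w) \<le> norm (fst z) + e0 \<Longrightarrow> norm (fst w') \<le> norm (fst z) + e0 \<Longrightarrow>
      snd w \<in> BC \<Longrightarrow> snd w' \<in> BC \<Longrightarrow> norm (psi (PM w') - psi (PM w)) \<le> M * norm (w' - w) \<and>
       \<bar>FF w' - FF w - psi (PM w) \<bullet> (w' - w)\<bar> \<le> M * (norm (w' - w))^2"
    using core[of "norm (fst z) + e0"] by blast
  have nb: "norm (fst w) \<le> norm (fst z) + e0" "snd w \<in> BC" if w: "w \<in> ball z e0" for w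
  proof -
    have "norm (fst w) \<le> norm (fst z) + norm (fst w - fst z)"
      by (metis add.commute diff_add_cancel norm_triangle_ineq)
    also have "norm (fst w - fst z) \<le> norm (w - z)"
    proof -
      have "w - z = (fst w - fst z, snd w - snd z)" by (simp add: prod_eq_iff)
      then show ?thesis using norm_fst_le[of "fst w - fst z" "snd w - snd z"] by simp
    qed
    also have "norm (w - z) < e0" using w by (simp add: dist_norm norm_minus_commute)
    finally show "norm (fst w) \<le> norm (fst z) + e0" by simp
    show "snd w \<in> BC" using e0(2) w OB_BC by auto
  qed
  show ?thesis using e0 M nb by blast
qed

lemma deriv:
  assumes "z \<in> UNIV \<times> OB"
  shows "(FF has_derivative (\<lambda>h. psi (PM z) \<bullet> h)) (at z)"
proof -
  obtain e0 M where e0: "e0 > 0" "M \<ge> 0" "ball z e0 \<subseteq> UNIV \<times> OB"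
    and M: "\<And>w w'. w\<in>ball z e0 \<Longrightarrow> w'\<in>ball z e0 \<Longrightarrow>
       \<bar>FF w' - FF w - psi (PM w) \<bullet> (w' - w)\<bar> \<le> M * (norm (w' - w))^2"
    using near[OF assms] by blast
  show ?thesis
    unfolding has_derivative_at_alt
  proof (intro conjI allI impI)
    show "bounded_linear (\<lambda>h. psi (PM z) \<bullet> h)" by (rule bounded_linear_inner_right)
    fix e :: real assume e: "e > 0"
    define d where "d = min e0 (e / (M + 1))"
    have d: "d > 0" using e e0 by (simp add: d_def)
    have "norm (FF y - FF z - psi (PM z) \<bullet> (y - z)) \<le> e * norm (y - z)" if y: "norm (y - z) < d" for y
    proof -
      have yb: "y \<in> ball z e0" using y by (simp add: d_def dist_norm norm_minus_commute)
      have zb: "z \<in> ball z e0" using e0 by simp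
      have "M * norm (y - z) \<le> (M + 1) * (e / (M + 1))"
        using y e0(2) by (intro mult_mono) (auto simp: d_def)
      then have Mn: "M * norm (y - z) \<le> e" using e0(2) by simp
      have "\<bar>FF y - FF z - psi (PM z) \<bullet> (y - z)\<bar> \<le> M * (norm (y - z))^2" by (rule M[OF zb yb])
      also have "\<dots> = (M * norm (y - z)) * norm (y - z)" by (simp add: power2_eq_square)
      also have "\<dots> \<le> e * norm (y - z)" using Mn by (intro mult_right_mono) auto
      finally show ?thesis by simp
    qed
    then show "\<exists>d>0. \<forall>y. norm (y - z) < d \<longrightarrow> norm (FF y - FF z - psi (PM z) \<bullet> (y - z)) \<le> e * norm (y - z)"
      using d by blast
  qed
qed

lemma C11: "C11_on (UNIV \<times> OB) FF"
  unfolding C11_on_def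
proof (intro exI[of _ "\<lambda>z. psi (PM z)"] conjI ballI)
  fix z :: "(real^'d) \<times> (real^'m)" assume z: "z \<in> UNIV \<times> OB"
  show "(FF has_derivative (\<lambda>h. psi (PM z) \<bullet> h)) (at z)" by (rule deriv[OF z])
next
  fix z :: "(real^'d) \<times> (real^'m)" assume z: "z \<in> UNIV \<times> OB"
  obtain e0 M where e0: "e0 > 0" "M \<ge> 0"
    and M: "\<And>w w'. w\<in>ball z e0 \<Longrightarrow> w'\<in>ball z e0 \<Longrightarrow> norm (psi (PM w') - psi (PM w)) \<le> M * norm (w' - w)"
    using near[OF z] by blast
  have "lipschitz_on M (ball z e0 \<inter> (UNIV \<times> OB)) (\<lambda>z. psi (PM z))"
    unfolding lipschitz_on_def using e0(2) M by (auto simp: dist_norm)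
  then show "\<exists>e>0. \<exists>C. lipschitz_on C (ball z e \<inter> (UNIV \<times> OB)) (\<lambda>z. psi (PM z))"
    using e0(1) by blast
qed

lemma support_convex:
  fixes f :: "'a::real_inner \<Rightarrow> real"
  assumes "\<And>x y. f x + c x \<bullet> (y - x) \<le> f y"
  shows "convex_on UNIV f"
proof (rule convex_onI)
  fix t :: real and x y :: 'a assume t: "0 < t" "t < 1"
  define z where "z = (1 - t) *\<^sub>R x + t *\<^sub>R y"
  have "(1 - t) * (f z + c z \<bullet> (x - z)) + t * (f z + c z \<bullet> (y - z)) \<le> (1 - t) * f x + t * f y"
    using t assms[of z x] assms[of z y] by (intro add_mono mult_left_mono) auto
  moreover have "(1 - t) * (f z + c z \<bullet> (x - z)) + t * (f z + c z \<bullet> (y - z)) =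
      f z + c z \<bullet> ((1 - t) *\<^sub>R (x - z) + t *\<^sub>R (y - z))"
    by (simp add: inner_add_right algebra_simps)
  moreover have "(1 - t) *\<^sub>R (x - z) + t *\<^sub>R (y - z) = 0"
    by (simp add: z_def algebra_simps)
  ultimately show "f ((1 - t) *\<^sub>R x + t *\<^sub>R y) \<le> (1 - t) * f x + t * f y" by (simp add: z_def)
qed simp

lemma obj_shift: "obj y \<tau> q = obj x \<tau> q + q \<bullet> (y - x)"
  unfolding obj_def by (simp add: inner_diff_right)

lemma Phi_convex:
  assumes t: "\<tau> \<in> BC"
  shows "convex_on UNIV (\<lambda>x. Phi L \<gamma> G H x \<tau>)"
proof (rule support_convex[where c = "\<lambda>x. pm x \<tau>"])
  fix x y
  have "obj y \<tau> (pm x \<tau>) \<le> obj y \<tau> (pm y \<tau>)" by (rule pm_max[OF t])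
  then show "Phi L \<gamma> G H x \<tau> + pm x \<tau> \<bullet> (y - x) \<le> Phi L \<gamma> G H y \<tau>"
    using obj_shift[of y \<tau> "pm x \<tau>" x] by (simp add: Phi_eq[OF t])
qed

lemma A_inv: "A ** matrix_inv A = mat 1"
proof -
  have "inj ((*v) A)"
  proof (rule injI)
    fix u w assume "A *v u = A *v w"
    then have "A *v (u - w) = 0" by (simp add: matrix_vector_mult_diff_distrib)
    then show "u = w" using A_posdef[of "u - w"] by auto
  qed
  then obtain B where "B ** A = mat 1" using matrix_left_invertible_injective by blast
  then have "invertible A" using invertible_left_inverse by blast
  then have "\<exists>A'. A ** A' = mat 1 \<and> A' ** A = mat 1" unfolding invertible_def by blast
  then show ?thesis unfolding matrix_inv_def by (rule someI2_ex) blast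
qed

lemma dual_ineq: "d \<bullet> v - Q d \<le> (1/2) * (v \<bullet> (matrix_inv A *v v))"
proof -
  define B where "B = matrix_inv A"
  have ABv: "A *v (B *v v) = v" using A_inv by (simp add: B_def matrix_vector_mul_assoc)
  have "0 \<le> Q (d + (-1) *\<^sub>R (B *v v))" by (rule Q_nonneg)
  also have "\<dots> = Q d - (B *v v) \<bullet> (A *v d) + Q (B *v v)"
    using Q_expand[of d "-1" "B *v v"] by simp
  also have "(B *v v) \<bullet> (A *v d) = d \<bullet> v" using A_symm[of "B *v v" d] ABv by simp
  also have "Q (B *v v) = (1/2) * (v \<bullet> (B *v v))" unfolding Q_def ABv by (simp add: inner_commute)
  finally show ?thesis by (simp add: B_def)
qed

lemma Phi_hess:
  assumes t: "\<tau> \<in> BC"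
  shows "hess_le (\<lambda>x. Phi L \<gamma> G H x \<tau>) (matrix_inv A)"
  unfolding hess_le_def
proof (rule support_convex[where c = "\<lambda>x. (1/2) *\<^sub>R (matrix_inv A *v x + x v* matrix_inv A) - pm x \<tau>"])
  fix x y
  define B where "B = matrix_inv A"
  define p where "p = pm x \<tau>"
  define v where "v = y - x"
  have "obj y \<tau> q \<le> Phi L \<gamma> G H x \<tau> + p \<bullet> v + (1/2) * (v \<bullet> (B *v v))" for q
  proof -
    have s1: "obj y \<tau> q = obj x \<tau> q + q \<bullet> v" by (simp add: obj_shift v_def)
    have s2: "obj x \<tau> q \<le> obj x \<tau> p - Q (q - p)" using strong[OF t] by (simp add: p_def)
    have s3: "q \<bullet> v = p \<bullet> v + (q - p) \<bullet> v" by (simp add: inner_diff_left)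
    have s4: "(q - p) \<bullet> v - Q (q - p) \<le> (1/2) * (v \<bullet> (B *v v))" using dual_ineq by (simp add: B_def)
    have s5: "Phi L \<gamma> G H x \<tau> = obj x \<tau> p" by (simp add: Phi_eq[OF t] p_def)
    show ?thesis using s1 s2 s3 s4 s5 by linarith
  qed
  then have Py: "Phi L \<gamma> G H y \<tau> \<le> Phi L \<gamma> G H x \<tau> + p \<bullet> v + (1/2) * (v \<bullet> (B *v v))"
    using Phi_eq[OF t, of y] by simp
  have iden: "(1/2) * (y \<bullet> (B *v y)) - (1/2) * (x \<bullet> (B *v x)) - ((1/2) *\<^sub>R (B *v x + x v* B)) \<bullet> v
      = (1/2) * (v \<bullet> (B *v v))"
  proof -
    have yv: "y = x + v" by (simp add: v_def)
    have a1: "(x v* B) \<bullet> v = x \<bullet> (B *v v)" by (rule dot_lmul_matrix)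
    have a2: "(B *v x) \<bullet> v = v \<bullet> (B *v x)" by (rule inner_commute)
    have a3: "(x + v) \<bullet> (B *v (x + v)) = x \<bullet> (B *v x) + x \<bullet> (B *v v) + v \<bullet> (B *v x) + v \<bullet> (B *v v)"
      by (simp add: matrix_vector_right_distrib inner_add_left inner_add_right)
    have a4: "((1/2) *\<^sub>R (B *v x + x v* B)) \<bullet> v = (1/2) * ((B *v x) \<bullet> v + (x v* B) \<bullet> v)"
      by (simp add: inner_add_left)
    show ?thesis unfolding yv using a1 a2 a3 a4 by (simp add: algebra_simps)
  qed
  show "(1/2) * (x \<bullet> (matrix_inv A *v x)) - Phi L \<gamma> G H x \<tau> +
      ((1/2) *\<^sub>R (matrix_inv A *v x + x v* matrix_inv A) - pm x \<tau>) \<bullet> (y - x)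
      \<le> (1/2) * (y \<bullet> (matrix_inv A *v y)) - Phi L \<gamma> G H y \<tau>"
    using Py iden unfolding B_def[symmetric] p_def[symmetric] v_def[symmetric]
    by (simp add: inner_diff_left)
qed

end

theorem lemma2p4:
  fixes H H1 H2 :: "'m::finite \<Rightarrow> real^'d \<Rightarrow> real"
    and L G :: "real^'d \<Rightarrow> real"
    and A :: "real^'d^'d"
    and \<gamma> :: real
  assumes H1_convex: "\<And>i. convex_on UNIV (H1 i)"
    and H2_convex: "\<And>i. convex_on UNIV (H2 i)"
    and H_def: "\<And>i p. H i p = H1 i p - H2 i p"
    and G_def: "\<And>p. G p = (\<Sum>i\<in>UNIV. H1 i p + H2 i p)"
    and gamma_pos: "\<gamma> > 0"
    and A_sym: "transpose A = A"
    and A_posdef: "\<And>v. v \<noteq> 0 \<Longrightarrow> v \<bullet> (A *v v) > 0"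
    and L_hess: "hess_ge L A"
  shows "C11_on (UNIV \<times> {\<tau>::real^'m. \<forall>i. -\<gamma> < \<tau> $ i \<and> \<tau> $ i < \<gamma>})
            (\<lambda>z. Phi L \<gamma> G H (fst z) (snd z)) \<and>
         (\<forall>\<tau>::real^'m. (\<forall>i. -\<gamma> < \<tau> $ i \<and> \<tau> $ i < \<gamma>) \<longrightarrow>
           (convex_on UNIV (\<lambda>x. Phi L \<gamma> G H x \<tau>) \<and>
           hess_le (\<lambda>x. Phi L \<gamma> G H x \<tau>) (matrix_inv A))) \<and>
         (\<forall>x \<tau>::real^'m. (\<forall>i. -\<gamma> < \<tau> $ i \<and> \<tau> $ i < \<gamma>) \<longrightarrow>
           (\<exists>Dx. ((\<lambda>y. Phi L \<gamma> G H y \<tau>) has_derivative (\<lambda>h. Dx \<bullet> h)) (at x) \<and>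
             (\<forall>i. ((\<lambda>t. Phi L \<gamma> G H x (\<tau> + t *\<^sub>R axis i 1)) has_real_derivative H i Dx) (at 0))))"
proof -
  interpret LT H H1 H2 L G A \<gamma>
    using assms by unfold_locales auto
  have FFe: "(\<lambda>z. Phi L \<gamma> G H (fst z) (snd z)) = FF" by (simp add: FF_def[abs_def])
  have OBe: "{\<tau>::real^'m. \<forall>i. -\<gamma> < \<tau> $ i \<and> \<tau> $ i < \<gamma>} = OB" by (simp add: OB_def)
  have P3: "\<exists>Dx. ((\<lambda>y. Phi L \<gamma> G H y \<tau>) has_derivative (\<lambda>h. Dx \<bullet> h)) (at x) \<and>
             (\<forall>i. ((\<lambda>t. Phi L \<gamma> G H x (\<tau> + t *\<^sub>R axis i 1)) has_real_derivative H i Dx) (at 0))"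
    if t: "\<tau> \<in> OB" for x \<tau>
  proof -
    define p where "p = PM (x, \<tau>)"
    have D: "(FF has_derivative (\<lambda>h. psi p \<bullet> h)) (at (x, \<tau>))"
      unfolding p_def using deriv t by simp
    have d1: "((\<lambda>y. (y, \<tau>)) has_derivative (\<lambda>h. (h, 0))) (at x)"
      by (intro has_derivative_Pair has_derivative_ident has_derivative_const)
    have "((FF \<circ> (\<lambda>y. (y, \<tau>))) has_derivative ((\<lambda>h. psi p \<bullet> h) \<circ> (\<lambda>h. (h, 0)))) (at x)"
      by (rule diff_chain_at[OF d1]) (use D in simp)
    moreover have "FF \<circ> (\<lambda>y. (y, \<tau>)) = (\<lambda>y. Phi L \<gamma> G H y \<tau>)"
      by (simp add: FF_def fun_eq_iff)
    moreover have "(\<lambda>h. psi p \<bullet> h) \<circ> (\<lambda>h. (h, 0)) = (\<lambda>h. p \<bullet> h)"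
      by (simp add: psi_def fun_eq_iff)
    ultimately have X: "((\<lambda>y. Phi L \<gamma> G H y \<tau>) has_derivative (\<lambda>h. p \<bullet> h)) (at x)"
      by simp
    have T: "((\<lambda>t. Phi L \<gamma> G H x (\<tau> + t *\<^sub>R axis i 1)) has_real_derivative H i p) (at 0)" for i
    proof -
      have d2: "((\<lambda>t::real. (x, \<tau> + t *\<^sub>R axis i 1)) has_derivative (\<lambda>t. (0, t *\<^sub>R axis i 1))) (at 0)"
        by (intro has_derivative_Pair has_derivative_const has_derivative_add has_derivative_scaleR_left
            has_derivative_ident derivative_eq_intros) auto
      have "((FF \<circ> (\<lambda>t::real. (x, \<tau> + t *\<^sub>R axis i 1))) has_derivative ((\<lambda>h. psi p \<bullet> h) \<circ> (\<lambda>t. (0, t *\<^sub>R axis i 1)))) (at 0)"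
        by (rule diff_chain_at[OF d2]) (use D in simp)
      moreover have "FF \<circ> (\<lambda>t::real. (x, \<tau> + t *\<^sub>R axis i 1)) = (\<lambda>t. Phi L \<gamma> G H x (\<tau> + t *\<^sub>R axis i 1))"
        by (simp add: FF_def fun_eq_iff)
      moreover have "(\<lambda>h. psi p \<bullet> h) \<circ> (\<lambda>t. (0, t *\<^sub>R axis i 1)) = (\<lambda>t. H i p * t)"
        by (simp add: psi_def fun_eq_iff inner_axis)
      ultimately have Y: "((\<lambda>t. Phi L \<gamma> G H x (\<tau> + t *\<^sub>R axis i 1)) has_derivative (*) (H i p)) (at 0)"
        by simp
      show ?thesis unfolding has_field_derivative_def by (rule Y)
    qed
    show ?thesis using X T by blast
  qed
  show ?thesis
    unfolding FFe OBe
    using C11 Phi_convex Phi_hess OB_BC P3 by (auto simp: OB_def)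
qed

end
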